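(* Let $f:X\to Y$ be a continuous map between metric spaces, with $X$ complete. If $f$ has the bounded path-lifting property for every rectifiable path $p:[0,1]\to Y$, then $f$ has the continuation property for every rectifiable path $p:[0,1]\to Y$. Consequently, if in addition $Y$ is path-connected and locally $\mathcal R$-contractible and $f$ is a local homeomorphism, then $f$ is a covering projection.
   Context: Length of a path $p:[a,b]\to Y$: $\ell(p)=\sup\sum_{i}d(p(t_i),p(t_{i+1}))$ over partitions of $[a,b]$; $p$ is rectifiable if $\ell(p)<\infty$. $\mathcal R$ denotes the family of all rectifiable paths $[0,1]\to Y$. $Y$ is locally $\mathcal R$-contractible if every $y_0\in Y$ has an open neighborhood $U$ with a continuous homotopy $H:U\times[0,1]\to U$ such that $H(y_0,t)=y_0$ for all $t$, $H(y,0)=y_0$, $H(y,1)=y$ for all $y\in U$, and each path $t\mapsto H(y,t)$ is rectifiable. For non-isolated $x\in X$, $D_x^-f=\liminf_{z\to x,\,z\neq x}\frac{d(f(z),f(x))}{d(z,x)}$; $X$ is assumed to have no isolated points. $f$ has the continuation property for $p:[0,1]\to Y$ if for every $b\in(0,1]$ and every continuous $q:[0,b)\to X$ with $f\circ q=p$ on $[0,b)$ there is a sequence $t_n\to b$ in $[0,b)$ with $(q(t_n))$ convergent in $X$. $f$ has the bounded path-lifting property for $p:[0,1]\to Y$ if for every $b\in(0,1]$ and every continuous $q:[0,b)\to X$ with $f\circ q=p$ on $[0,b)$ there exists $\alpha>0$ with $\inf\{D_x^-f:x\in\operatorname{Im}q\}\ge\alpha$. *)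

theory Defs
  imports "HOL-Analysis.Analysis"
begin

definition partition_sums :: "(real \<Rightarrow> 'b::metric_space) \<Rightarrow> real \<Rightarrow> real \<Rightarrow> real set" where
  "partition_sums p a b =
     {(\<Sum>i<n. dist (p (t i)) (p (t (Suc i)))) | t n.
        t 0 = a \<and> t n = b \<and> (\<forall>i<n. t i \<le> t (Suc i))}"

definition path_length :: "(real \<Rightarrow> 'b::metric_space) \<Rightarrow> real \<Rightarrow> real \<Rightarrow> ereal" where
  "path_length p a b = (SUP s \<in> partition_sums p a b. ereal s)"

definition rectifiable_path :: "(real \<Rightarrow> 'b::metric_space) \<Rightarrow> bool" where
  "rectifiable_path p \<longleftrightarrow> path p \<and> path_length p 0 1 < \<infinity>"

definition lower_deriv :: "('a::metric_space \<Rightarrow> 'b::metric_space) \<Rightarrow> 'a \<Rightarrow> ereal" where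
  "lower_deriv f x = Liminf (at x) (\<lambda>z. ereal (dist (f z) (f x) / dist z x))"

definition continuation_property ::
  "('a::metric_space \<Rightarrow> 'b::metric_space) \<Rightarrow> (real \<Rightarrow> 'b) \<Rightarrow> bool" where
  "continuation_property f p \<longleftrightarrow>
     (\<forall>b \<in> {0<..1}. \<forall>q. continuous_on {0..<b} q \<and> (\<forall>t \<in> {0..<b}. f (q t) = p t) \<longrightarrow>
        (\<exists>tn. (\<forall>n. tn n \<in> {0..<b}) \<and> tn \<longlonglongrightarrow> b \<and> convergent (\<lambda>n. q (tn n))))"

definition bounded_path_lifting ::
  "('a::metric_space \<Rightarrow> 'b::metric_space) \<Rightarrow> (real \<Rightarrow> 'b) \<Rightarrow> bool" where
  "bounded_path_lifting f p \<longleftrightarrow>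
     (\<forall>b \<in> {0<..1}. \<forall>q. continuous_on {0..<b} q \<and> (\<forall>t \<in> {0..<b}. f (q t) = p t) \<longrightarrow>
        (\<exists>\<alpha>>0. (INF x \<in> q ` {0..<b}. lower_deriv f x) \<ge> ereal \<alpha>))"

definition locally_R_contractible :: "'b::metric_space set \<Rightarrow> bool" where
  "locally_R_contractible Y \<longleftrightarrow>
     (\<forall>y0 \<in> Y. \<exists>U H. open U \<and> U \<subseteq> Y \<and> y0 \<in> U \<and>
        continuous_on (U \<times> {0..1}) H \<and> H ` (U \<times> {0..1}) \<subseteq> U \<and>
        (\<forall>t \<in> {0..1}. H (y0, t) = y0) \<and>
        (\<forall>y \<in> U. H (y, 0) = y0 \<and> H (y, 1) = y) \<and>
        (\<forall>y \<in> U. rectifiable_path (\<lambda>t. H (y, t))))"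

definition local_homeomorphism :: "('a::topological_space \<Rightarrow> 'b::topological_space) \<Rightarrow> bool" where
  "local_homeomorphism f \<longleftrightarrow>
     (\<forall>x. \<exists>T U g. x \<in> T \<and> open T \<and> open U \<and> homeomorphism T U f g)"

end

theory Submission
  imports Defs
begin
lemma ps_nonneg: "s \<in> partition_sums p a b \<Longrightarrow> 0 \<le> s"
  unfolding partition_sums_def by (auto intro: sum_nonneg)

lemma ps_single: "a \<le> b \<Longrightarrow> dist (p a) (p b) \<in> partition_sums p a b"
  unfolding partition_sums_def
  by (rule CollectI, rule exI[of _ "\<lambda>i. if i = 0 then a else b"], rule exI[of _ 1]) auto

lemma sum_split_add: "(\<Sum>i<n1+n2. g i) = (\<Sum>i<n1. g i) + (\<Sum>i<n2. g (n1+i :: nat))"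
  by (induct n2) (auto simp: add.assoc)

lemma ps_concat:
  assumes "s1 \<in> partition_sums p a b" "s2 \<in> partition_sums p b c"
  shows "s1 + s2 \<in> partition_sums p a c"
proof -
  obtain t1 n1 where 1: "s1 = (\<Sum>i<n1. dist (p (t1 i)) (p (t1 (Suc i))))" "t1 0 = a" "t1 n1 = b"
    "\<forall>i<n1. t1 i \<le> t1 (Suc i)"
    using assms(1) unfolding partition_sums_def by blast
  obtain t2 n2 where 2: "s2 = (\<Sum>i<n2. dist (p (t2 i)) (p (t2 (Suc i))))" "t2 0 = b" "t2 n2 = c"
    "\<forall>i<n2. t2 i \<le> t2 (Suc i)"
    using assms(2) unfolding partition_sums_def by blast
  define t where "t i = (if i \<le> n1 then t1 i else t2 (i - n1))" for i
  have tt2: "t (n1 + i) = t2 i" for i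
    using 1 2 by (auto simp: t_def)
  have "(\<Sum>i<n1+n2. dist (p (t i)) (p (t (Suc i))))
      = (\<Sum>i<n1. dist (p (t i)) (p (t (Suc i)))) + (\<Sum>i<n2. dist (p (t (n1+i))) (p (t (Suc (n1+i)))))"
    by (rule sum_split_add)
  also have "(\<Sum>i<n1. dist (p (t i)) (p (t (Suc i)))) = s1"
    unfolding 1 by (intro sum.cong) (auto simp: t_def)
  also have "(\<Sum>i<n2. dist (p (t (n1+i))) (p (t (Suc (n1+i))))) = s2"
    unfolding 2 using tt2[of "Suc _"] by (simp add: tt2)
  finally have s: "s1 + s2 = (\<Sum>i<n1+n2. dist (p (t i)) (p (t (Suc i))))" by simp
  have mono: "\<forall>i<n1+n2. t i \<le> t (Suc i)"
  proof (intro allI impI)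
    fix i assume i: "i < n1 + n2"
    show "t i \<le> t (Suc i)"
    proof (cases "i < n1")
      case True then show ?thesis using 1 by (auto simp: t_def)
    next
      case False
      then obtain k where k: "i = n1 + k" "k < n2" using i by (metis add_less_cancel_left le_Suc_ex not_less)
      show ?thesis using 2 k tt2[of k] tt2[of "Suc k"] by simp
    qed
  qed
  show ?thesis unfolding partition_sums_def
    using s mono 1 2 tt2[of n2] by (auto simp: t_def intro!: exI[of _ t] exI[of _ "n1+n2"])
qed

definition rlen :: "(real \<Rightarrow> 'b::metric_space) \<Rightarrow> real \<Rightarrow> real \<Rightarrow> real" where
  "rlen p a b = Sup (partition_sums p a b)"

lemma ps_ne: "a \<le> b \<Longrightarrow> partition_sums p a b \<noteq> {}"
  using ps_single by blast

lemma rect_bdd: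
  assumes "rectifiable_path p"
  obtains B where "\<And>s. s \<in> partition_sums p 0 1 \<Longrightarrow> s \<le> B"
proof -
  have "path_length p 0 1 < \<infinity>" using assms unfolding rectifiable_path_def by simp
  then obtain n :: nat where n: "path_length p 0 1 < ereal (real n)"
    using less_PInf_Ex_of_nat[of "path_length p 0 1"] by force
  have "s \<le> real n" if "s \<in> partition_sums p 0 1" for s
  proof -
    have "ereal s \<le> path_length p 0 1" unfolding path_length_def using that by (rule SUP_upper)
    then have "ereal s < ereal (real n)" using n by (rule le_less_trans)
    then show ?thesis by simp
  qed
  then show ?thesis using that by blast
qed

lemma ps_bdd:
  assumes "rectifiable_path p" "0 \<le> a" "a \<le> b" "b \<le> 1"
  shows "bdd_above (partition_sums p a b)"
proof -
  obtain B where B: "\<And>s. s \<in> partition_sums p 0 1 \<Longrightarrow> s \<le> B" using rect_bdd assms(1) by blast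
  have "s \<le> B" if s: "s \<in> partition_sums p a b" for s
  proof -
    have "dist (p 0) (p a) + s \<in> partition_sums p 0 b"
      by (rule ps_concat[OF ps_single s]) (use assms in auto)
    then have "dist (p 0) (p a) + s + dist (p b) (p 1) \<in> partition_sums p 0 1"
      by (rule ps_concat[OF _ ps_single]) (use assms in auto)
    then show ?thesis using B[of "dist (p 0) (p a) + s + dist (p b) (p 1)"]
      zero_le_dist[of "p 0" "p a"] zero_le_dist[of "p b" "p 1"] by linarith
  qed
  then show ?thesis by (auto simp: bdd_above_def)
qed

lemma rlen_upper:
  assumes "rectifiable_path p" "0 \<le> a" "a \<le> b" "b \<le> 1" "s \<in> partition_sums p a b"
  shows "s \<le> rlen p a b"
  unfolding rlen_def using ps_bdd[OF assms(1-4)] assms(5) by (rule cSup_upper[rotated])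

lemma rlen_dist:
  assumes "rectifiable_path p" "0 \<le> a" "a \<le> b" "b \<le> 1"
  shows "dist (p a) (p b) \<le> rlen p a b"
  using rlen_upper[OF assms ps_single[OF assms(3)]] .

lemma rlen_nonneg:
  assumes "rectifiable_path p" "0 \<le> a" "a \<le> b" "b \<le> 1"
  shows "0 \<le> rlen p a b"
  using rlen_dist[OF assms] zero_le_dist[of "p a" "p b"] by linarith

lemma rlen_add:
  assumes "rectifiable_path p" "0 \<le> a" "a \<le> b" "b \<le> c" "c \<le> 1"
  shows "rlen p a b + rlen p b c \<le> rlen p a c"
proof -
  have 1: "rlen p a b \<le> rlen p a c - s2" if s2: "s2 \<in> partition_sums p b c" for s2
    unfolding rlen_def[of p a b]
  proof (rule cSup_least)
    show "partition_sums p a b \<noteq> {}" using ps_ne assms by blast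
    fix s1 assume "s1 \<in> partition_sums p a b"
    then have "s1 + s2 \<in> partition_sums p a c" using ps_concat s2 by blast
    then have "s1 + s2 \<le> rlen p a c" using rlen_upper[OF assms(1,2) _ assms(5)] assms(3,4) by auto
    then show "s1 \<le> rlen p a c - s2" by simp
  qed
  have "rlen p b c \<le> rlen p a c - rlen p a b"
    unfolding rlen_def[of p b c]
  proof (rule cSup_least)
    show "partition_sums p b c \<noteq> {}" using ps_ne assms by blast
    fix s2 assume "s2 \<in> partition_sums p b c"
    from 1[OF this] show "s2 \<le> rlen p a c - rlen p a b" by simp
  qed
  then show ?thesis by simp
qed

lemma core:
  fixes f :: "'a::metric_space \<Rightarrow> 'b::metric_space" and q :: "real \<Rightarrow> 'a"
  assumes p: "rectifiable_path p" and b: "0 < b" "b \<le> 1"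
    and cq: "continuous_on {0..<b} q" and lift: "\<forall>t\<in>{0..<b}. f (q t) = p t"
    and loc: "\<forall>t\<in>{0..<b}. \<exists>r>0. \<forall>z. dist z (q t) < r \<longrightarrow> \<alpha> * dist z (q t) \<le> dist (f z) (f (q t))"
    and al: "\<alpha> > 0" and s: "0 \<le> s" and st: "s \<le> t" "t < b"
  shows "\<alpha> * dist (q s) (q t) \<le> rlen p s t"
proof (rule ccontr)
  assume nt: "\<not> ?thesis"
  define A where "A = {t. s \<le> t \<and> t < b \<and> \<not> \<alpha> * dist (q s) (q t) \<le> rlen p s t}"
  have tA: "t \<in> A" using nt st unfolding A_def by auto
  have bddA: "bdd_below A" unfolding A_def by (auto intro: bdd_belowI[of _ s])
  define \<tau> where "\<tau> = Inf A"
  have \<tau>t: "\<tau> \<le> t" unfolding \<tau>_def using tA bddA by (rule cInf_lower)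
  have s\<tau>: "s \<le> \<tau>" unfolding \<tau>_def using tA by (intro cInf_greatest) (auto simp: A_def)
  have \<tau>b: "\<tau> < b" using \<tau>t st by linarith
  have \<tau>0: "\<tau> \<in> {0..<b}" using s s\<tau> \<tau>b by auto
  have good: "\<alpha> * dist (q s) (q u) \<le> rlen p s u" if "s \<le> u" "u < \<tau>" for u
  proof (rule ccontr)
    assume "\<not> ?thesis"
    then have "u \<in> A" using that \<tau>b unfolding A_def by auto
    then have "\<tau> \<le> u" unfolding \<tau>_def using bddA by (rule cInf_lower)
    then show False using that by linarith
  qed
  obtain r where r: "r > 0" "\<forall>z. dist z (q \<tau>) < r \<longrightarrow> \<alpha> * dist z (q \<tau>) \<le> dist (f z) (f (q \<tau>))"
    using loc \<tau>0 by blast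
  obtain \<delta> where \<delta>: "\<delta> > 0" "\<forall>u\<in>{0..<b}. dist u \<tau> < \<delta> \<longrightarrow> dist (q u) (q \<tau>) < r"
    using cq \<tau>0 r(1) unfolding continuous_on_iff by blast
  have key: "\<alpha> * dist (q u) (q \<tau>) \<le> dist (p u) (p \<tau>)" if "u \<in> {0..<b}" "\<bar>u - \<tau>\<bar> < \<delta>" for u
  proof -
    have "dist (q u) (q \<tau>) < r" using \<delta>(2) that by (auto simp: dist_real_def)
    then have "\<alpha> * dist (q u) (q \<tau>) \<le> dist (f (q u)) (f (q \<tau>))" using r(2) by blast
    then show ?thesis using lift that(1) \<tau>0 by simp
  qed
  have good\<tau>: "\<alpha> * dist (q s) (q \<tau>) \<le> rlen p s \<tau>"
  proof (cases "\<tau> = s")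
    case True
    then show ?thesis using rlen_nonneg[OF p s order_refl] \<tau>b b by simp
  next
    case False
    define u where "u = max s (\<tau> - \<delta>/2)"
    have u: "s \<le> u" "u < \<tau>" "\<bar>u - \<tau>\<bar> < \<delta>" "u \<in> {0..<b}"
      using False s\<tau> \<delta>(1) s \<tau>b unfolding u_def by auto
    have "\<alpha> * dist (q s) (q \<tau>) \<le> \<alpha> * dist (q s) (q u) + \<alpha> * dist (q u) (q \<tau>)"
      using dist_triangle[of "q s" "q \<tau>" "q u"] al by (simp add: distrib_left[symmetric])
    also have "\<dots> \<le> rlen p s u + dist (p u) (p \<tau>)"
      using good[OF u(1,2)] key[OF u(4,3)] by linarith
    also have "\<dots> \<le> rlen p s u + rlen p u \<tau>"
      using rlen_dist[OF p _ _ , of u \<tau>] u s \<tau>b b by auto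
    also have "\<dots> \<le> rlen p s \<tau>"
      using rlen_add[OF p s u(1), of \<tau>] u \<tau>b b by auto
    finally show ?thesis .
  qed
  have after: "v \<notin> A" if "\<tau> \<le> v" "v < \<tau> + \<delta>" for v
  proof
    assume vA: "v \<in> A"
    then have vb: "v < b" "s \<le> v" unfolding A_def by auto
    have "\<alpha> * dist (q s) (q v) \<le> \<alpha> * dist (q s) (q \<tau>) + \<alpha> * dist (q \<tau>) (q v)"
      using dist_triangle[of "q s" "q v" "q \<tau>"] al by (simp add: distrib_left[symmetric])
    also have "\<dots> \<le> rlen p s \<tau> + dist (p \<tau>) (p v)"
      using good\<tau> key[of v] that vb s s\<tau> by (auto simp: dist_commute)
    also have "\<dots> \<le> rlen p s \<tau> + rlen p \<tau> v"
      using rlen_dist[OF p, of \<tau> v] that vb s s\<tau> b by auto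
    also have "\<dots> \<le> rlen p s v"
      using rlen_add[OF p s s\<tau>, of v] that vb b by auto
    finally show False using vA unfolding A_def by auto
  qed
  have "Inf A < \<tau> + \<delta>" using \<delta>(1) unfolding \<tau>_def by simp
  then obtain v where "v \<in> A" "v < \<tau> + \<delta>"
    using cInf_less_iff[of A, OF _ bddA] tA by blast
  moreover have "\<tau> \<le> v" unfolding \<tau>_def using \<open>v \<in> A\<close> bddA by (rule cInf_lower)
  ultimately show False using after by blast
qed

lemma part1:
  fixes f :: "'a::metric_space \<Rightarrow> 'b::metric_space"
  assumes p: "rectifiable_path p" and bpl: "bounded_path_lifting f p"
    and cmp: "complete (UNIV :: 'a set)"
  shows "continuation_property f p"
  unfolding continuation_property_def
proof (intro ballI allI impI)
  fix b and q :: "real \<Rightarrow> 'a"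
  assume b: "b \<in> {0<..1}" and h: "continuous_on {0..<b} q \<and> (\<forall>t\<in>{0..<b}. f (q t) = p t)"
  obtain \<alpha> where al: "\<alpha> > 0" and INF: "ereal \<alpha> \<le> (INF x\<in>q`{0..<b}. lower_deriv f x)"
    using bpl b h unfolding bounded_path_lifting_def by blast
  have loc: "\<forall>t\<in>{0..<b}. \<exists>r>0. \<forall>z. dist z (q t) < r \<longrightarrow> (\<alpha>/2) * dist z (q t) \<le> dist (f z) (f (q t))"
  proof
    fix t assume t: "t \<in> {0..<b}"
    define x where "x = q t"
    have "(INF x\<in>q`{0..<b}. lower_deriv f x) \<le> lower_deriv f x"
      unfolding x_def using t by (intro INF_lower) auto
    with INF have "ereal \<alpha> \<le> lower_deriv f x" by (rule order_trans)
    moreover have "ereal (\<alpha>/2) < ereal \<alpha>" using al by simp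
    ultimately have "ereal (\<alpha>/2) < Liminf (at x) (\<lambda>z. ereal (dist (f z) (f x) / dist z x))"
      unfolding lower_deriv_def by (rule less_le_trans[rotated])
    then have ev: "eventually (\<lambda>z. ereal (\<alpha>/2) < ereal (dist (f z) (f x) / dist z x)) (at x)"
      using le_Liminf_iff[THEN iffD1, OF order_refl] by blast
    then obtain d where d: "d > 0" "\<forall>z. z \<noteq> x \<and> dist z x < d \<longrightarrow> \<alpha>/2 < dist (f z) (f x) / dist z x"
      unfolding eventually_at by auto
    have "(\<alpha>/2) * dist z x \<le> dist (f z) (f x)" if "dist z x < d" for z
    proof (cases "z = x")
      case False
      then have "\<alpha>/2 < dist (f z) (f x) / dist z x" using d that by blast
      then show ?thesis using False by (simp add: pos_less_divide_eq less_imp_le)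
    qed simp
    then show "\<exists>r>0. \<forall>z. dist z (q t) < r \<longrightarrow> (\<alpha>/2) * dist z (q t) \<le> dist (f z) (f (q t))"
      using d(1) unfolding x_def by blast
  qed
  have b01: "0 < b" "b \<le> 1" using b by auto
  have al2: "\<alpha>/2 > 0" using al by simp
  have est: "\<alpha>/2 * dist (q s) (q t) \<le> rlen p s t" if "0 \<le> s" "s \<le> t" "t < b" for s t
    using core[OF p b01 _ _ loc al2 that] h by blast
  define M where "M = Sup ((\<lambda>t. rlen p 0 t) ` {0..<b})"
  have bddM: "bdd_above ((\<lambda>t. rlen p 0 t) ` {0..<b})"
  proof (rule bdd_aboveI2)
    fix t assume t: "t \<in> {0..<b}"
    show "rlen p 0 t \<le> rlen p 0 1"
      using rlen_add[OF p order_refl, of t 1] rlen_nonneg[OF p, of t 1] t b01 by auto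
  qed
  have leM: "rlen p 0 t \<le> M" if "t \<in> {0..<b}" for t
    unfolding M_def using bddM that by (intro cSup_upper) auto
  have cauchy: "\<exists>t1\<in>{0..<b}. \<forall>s t. t1 \<le> s \<longrightarrow> s < b \<longrightarrow> t1 \<le> t \<longrightarrow> t < b \<longrightarrow> dist (q s) (q t) < e"
    if e: "e > 0" for e
  proof -
    have "M - \<alpha>/2 * e < M" using e al by simp
    then obtain t1 where t1: "t1 \<in> {0..<b}" "M - \<alpha>/2 * e < rlen p 0 t1"
      unfolding M_def using less_cSup_iff[OF _ bddM] b01 by force
    have main: "dist (q s) (q t) < e" if "t1 \<le> s" "s \<le> t" "t < b" for s t
    proof -
      have s0: "0 \<le> s" using t1 that by auto
      have "\<alpha>/2 * dist (q s) (q t) \<le> rlen p s t" using est[OF s0 that(2,3)] .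
      also have "\<dots> \<le> rlen p 0 t - rlen p 0 s" using rlen_add[OF p order_refl s0 that(2)] that b01 by auto
      also have "\<dots> \<le> M - rlen p 0 t1"
        using leM[of t] rlen_add[OF p order_refl _ that(1)] rlen_nonneg[OF p _ that(1)] t1 that b01
        by auto
      also have "\<dots> < \<alpha>/2 * e" using t1 by linarith
      finally show ?thesis using al by simp
    qed
    show ?thesis
    proof (intro bexI[OF _ t1(1)] allI impI)
      fix s t assume "t1 \<le> s" "s < b" "t1 \<le> t" "t < b"
      then show "dist (q s) (q t) < e"
        using main[of s t] main[of t s] by (cases "s \<le> t") (auto simp: dist_commute)
    qed
  qed
  define tn where "tn n = b - b / real (Suc (Suc n))" for n
  have tn_in: "tn n \<in> {0..<b}" for n
    using b01 unfolding tn_def by (auto simp: field_simps)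
  have "(\<lambda>n. b / real (Suc (Suc n))) \<longlonglongrightarrow> 0"
    by (intro LIMSEQ_Suc lim_const_over_n)
  then have tn_lim: "tn \<longlonglongrightarrow> b" unfolding tn_def
    using tendsto_diff[OF tendsto_const[of b]] by fastforce
  have "Cauchy (\<lambda>n. q (tn n))"
    unfolding Cauchy_def
  proof (intro allI impI)
    fix e :: real assume "e > 0"
    then obtain t1 where t1: "t1 \<in> {0..<b}"
      "\<forall>s t. t1 \<le> s \<longrightarrow> s < b \<longrightarrow> t1 \<le> t \<longrightarrow> t < b \<longrightarrow> dist (q s) (q t) < e"
      using cauchy by blast
    have "eventually (\<lambda>n. t1 < tn n) sequentially"
      using tn_lim t1(1) by (intro order_tendstoD) auto
    then obtain N where N: "\<forall>n\<ge>N. t1 < tn n" unfolding eventually_sequentially by blast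
    show "\<exists>M. \<forall>m\<ge>M. \<forall>n\<ge>M. dist (q (tn m)) (q (tn n)) < e"
      using N t1(2) tn_in by (intro exI[of _ N]) (auto intro!: less_imp_le)
  qed
  then obtain l where "(\<lambda>n. q (tn n)) \<longlonglongrightarrow> l"
    using cmp unfolding complete_def by blast
  then show "\<exists>tn. (\<forall>n. tn n \<in> {0..<b}) \<and> tn \<longlonglongrightarrow> b \<and> convergent (\<lambda>n. q (tn n))"
    using tn_in tn_lim unfolding convergent_def by blast
qed

lemma lift_unique:
  fixes f :: "'a::metric_space \<Rightarrow> 'b::metric_space" and S :: "real set"
  assumes lh: "local_homeomorphism f" and S: "connected S"
    and c1: "continuous_on S qa" and c2: "continuous_on S qb"
    and eq: "\<forall>t\<in>S. f (qa t) = f (qb t)" and a: "a \<in> S" "qa a = qb a" and t: "t \<in> S"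
  shows "qa t = qb t"
  using S a(1) t a(2)
proof (rule connected_induction_simple[where P="\<lambda>t. qa t = qb t"])
  fix c assume c: "c \<in> S"
  show "\<exists>T. openin (top_of_set S) T \<and> c \<in> T \<and> (\<forall>x\<in>T. \<forall>y\<in>T. qa x = qb x \<longrightarrow> qa y = qb y)"
  proof (cases "qa c = qb c")
    case True
    obtain T U g where TU: "qa c \<in> T" "open T" "open U" "homeomorphism T U f g"
      using lh unfolding local_homeomorphism_def by blast
    define N where "N = (S \<inter> qa -` T) \<inter> (S \<inter> qb -` T)"
    have "openin (top_of_set S) N" unfolding N_def
      by (intro openin_Int continuous_openin_preimage_gen c1 c2 TU(2))
    moreover have "c \<in> N" using c True TU(1) unfolding N_def by auto
    moreover have "qa y = qb y" if "y \<in> N" for y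
    proof -
      have "g (f (qa y)) = qa y" "g (f (qb y)) = qb y"
        using TU(4) that unfolding N_def homeomorphism_def by auto
      moreover have "f (qa y) = f (qb y)" using eq that unfolding N_def by blast
      ultimately show ?thesis by metis
    qed
    ultimately show ?thesis by blast
  next
    case False
    define e where "e = dist (qa c) (qb c) / 2"
    have e: "e > 0" using False unfolding e_def by simp
    define N where "N = (S \<inter> qa -` ball (qa c) e) \<inter> (S \<inter> qb -` ball (qb c) e)"
    have "openin (top_of_set S) N" unfolding N_def
      by (intro openin_Int continuous_openin_preimage_gen c1 c2 open_ball)
    moreover have "c \<in> N" using c e unfolding N_def by auto
    moreover have "qa y \<noteq> qb y" if "y \<in> N" for y
    proof
      assume y: "qa y = qb y"
      have "dist (qa c) (qb c) \<le> dist (qa c) (qa y) + dist (qb y) (qb c)"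
        using dist_triangle[of "qa c" "qb c" "qa y"] y by simp
      also have "\<dots> < e + e" using that unfolding N_def by (auto simp: dist_commute intro!: add_strict_mono)
      finally show False unfolding e_def by simp
    qed
    ultimately show ?thesis by blast
  qed
qed

lemma lift_extend:
  fixes s c :: real
  assumes hom: "homeomorphism T V f g" and cq: "continuous_on {0..s} q"
    and lq: "\<forall>t\<in>{0..s}. f (q t) = p t"
    and qs: "q s \<in> T" and cp: "continuous_on {s..c} p" and pV: "p ` {s..c} \<subseteq> V"
    and s: "0 \<le> s" "s \<le> c"
  shows "\<exists>q'. continuous_on {0..c} q' \<and> q' 0 = q 0 \<and> (\<forall>t\<in>{0..c}. f (q' t) = p t)"
proof (intro exI conjI)
  let ?q = "\<lambda>t. if t \<le> s then q t else g (p t)"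
  have cg: "continuous_on V g" and fg: "\<forall>y\<in>V. f (g y) = y" and gf: "\<forall>x\<in>T. g (f x) = x"
    using hom unfolding homeomorphism_def by auto
  have e1: "{x \<in> {0..c}. x \<le> s} = {0..s}" and e2: "{x \<in> {0..c}. s \<le> x} = {s..c}"
    using s by auto
  show "continuous_on {0..c} ?q"
  proof (rule continuous_on_cases_le)
    show "continuous_on {x \<in> {0..c}. x \<le> s} q" using cq e1 by simp
    show "continuous_on {x \<in> {0..c}. s \<le> x} (\<lambda>t. g (p t))"
      unfolding e2 by (rule continuous_on_compose2[OF cg cp pV])
    show "continuous_on {0..c} (\<lambda>x. x)" by (rule continuous_on_id)
    fix x assume "x \<in> {0..c}" "x = s"
    then show "q x = g (p x)" using gf qs lq s by auto
  qed
  show "?q 0 = q 0" using s by simp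
  show "\<forall>t\<in>{0..c}. f (?q t) = p t"
  proof
    fix t assume t: "t \<in> {0..c}"
    show "f (?q t) = p t"
    proof (cases "t \<le> s")
      case False
      then have "p t \<in> V" using pV t by auto
      then show ?thesis using fg False by simp
    qed (use lq t in auto)
  qed
qed

lemma lift_exists:
  fixes f :: "'a::metric_space \<Rightarrow> 'b::metric_space"
  assumes lh: "local_homeomorphism f" and cf: "continuous_on UNIV f" and pp: "path p"
    and cp: "continuation_property f p" and x: "f x = p 0"
  shows "\<exists>q. continuous_on {0..1} q \<and> q 0 = x \<and> (\<forall>t\<in>{0..1}. f (q t) = p t)"
proof -
  define B where "B = {c\<in>{0..1}. \<exists>q. continuous_on {0..c} q \<and> q 0 = x \<and> (\<forall>t\<in>{0..c}. f (q t) = p t)}"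
  have B0: "0 \<in> B" unfolding B_def using x by (auto intro!: exI[of _ "\<lambda>_. x"])
  have Bne: "B \<noteq> {}" using B0 by blast
  have bddB: "bdd_above B" unfolding B_def by (auto intro: bdd_aboveI[of _ 1])
  define \<tau> where "\<tau> = Sup B"
  have \<tau>0: "0 \<le> \<tau>" unfolding \<tau>_def using bddB B0 by (rule cSup_upper[rotated])
  have \<tau>1: "\<tau> \<le> 1" unfolding \<tau>_def using Bne by (rule cSup_least) (auto simp: B_def)
  have cpp: "continuous_on {0..1} p" using pp unfolding path_def .
  have sheet: "\<exists>T V g. z \<in> T \<and> open T \<and> open V \<and> homeomorphism T V f g" for z
    using lh unfolding local_homeomorphism_def by blast
  have pnear: "\<exists>\<delta>>0. \<forall>u\<in>{0..1}. \<bar>u - \<tau>\<bar> < \<delta> \<longrightarrow> p u \<in> V" if V: "open V" "p \<tau> \<in> V" for V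
  proof -
    obtain e where e: "e > 0" "ball (p \<tau>) e \<subseteq> V" using V open_contains_ball by blast
    have "\<tau> \<in> {0..1}" using \<tau>0 \<tau>1 by auto
    from cpp[unfolded continuous_on_iff, rule_format, OF this e(1)]
    obtain d where d: "d > 0" "\<forall>u\<in>{0..1}. dist u \<tau> < d \<longrightarrow> dist (p u) (p \<tau>) < e"
      by blast
    show ?thesis using d e by (intro exI[of _ d]) (auto simp: dist_real_def dist_commute)
  qed
  have finish: "\<exists>c\<in>B. \<tau> \<le> c \<and> (\<tau> < c \<or> c = 1)"
    if s: "0 \<le> s" "s \<le> \<tau>" "\<tau> - \<delta> < s" "\<delta> > 0" and q: "continuous_on {0..s} q" "q 0 = x"
      "\<forall>t\<in>{0..s}. f (q t) = p t" and hom: "homeomorphism T V f g" "q s \<in> T"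
      and pV: "\<forall>u\<in>{0..1}. \<bar>u - \<tau>\<bar> < \<delta> \<longrightarrow> p u \<in> V" for s q T V g \<delta>
  proof -
    define c where "c = min 1 (\<tau> + \<delta>/2)"
    have sc: "s \<le> c" "c \<le> 1" "\<tau> \<le> c" using s \<tau>1 unfolding c_def by auto
    have "p ` {s..c} \<subseteq> V"
    proof
      fix y assume "y \<in> p ` {s..c}"
      then obtain u where u: "u \<in> {s..c}" "y = p u" by blast
      have "u \<in> {0..1}" "\<bar>u - \<tau>\<bar> < \<delta>" using u(1) s sc unfolding c_def by auto
      then show "y \<in> V" using pV u(2) by blast
    qed
    moreover have "continuous_on {s..c} p" using cpp by (rule continuous_on_subset) (use s sc in auto)
    ultimately obtain q' where "continuous_on {0..c} q'" "q' 0 = q 0" "\<forall>t\<in>{0..c}. f (q' t) = p t"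
      using lift_extend[OF hom(1) q(1) q(3) hom(2)] s sc by blast
    then have "c \<in> B" unfolding B_def using q(2) s sc by auto
    moreover have "\<tau> < c \<or> c = 1" using s unfolding c_def by auto
    ultimately show ?thesis using sc by blast
  qed
  have claim: "\<exists>c\<in>B. \<tau> \<le> c \<and> (\<tau> < c \<or> c = 1)"
  proof (cases "\<tau> \<in> B")
    case True
    then obtain q where q: "continuous_on {0..\<tau>} q" "q 0 = x" "\<forall>t\<in>{0..\<tau>}. f (q t) = p t"
      unfolding B_def by blast
    obtain T V g where TV: "q \<tau> \<in> T" "open T" "open V" "homeomorphism T V f g"
      using sheet by blast
    have "p \<tau> = f (q \<tau>)" using q(3) \<tau>0 by auto
    also have "\<dots> \<in> f ` T" using TV(1) by blast
    finally have "p \<tau> \<in> V" using homeomorphism_image1[OF TV(4)] by simp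
    then obtain \<delta> where "\<delta> > 0" "\<forall>u\<in>{0..1}. \<bar>u - \<tau>\<bar> < \<delta> \<longrightarrow> p u \<in> V"
      using pnear TV(3) by blast
    then show ?thesis using finish[OF \<tau>0 order_refl _ _ q TV(4,1)] by simp
  next
    case False
    have \<tau>pos: "0 < \<tau>" using False B0 \<tau>0 by (cases "\<tau> = 0") auto
    have ex: "\<exists>c. c \<in> B \<and> t < c" if "t \<in> {0..<\<tau>}" for t
      using that less_cSup_iff[OF Bne bddB, of t] unfolding \<tau>_def by auto
    define C where "C t = (SOME c. c \<in> B \<and> t < c)" for t
    have C: "C t \<in> B" "t < C t" if "t \<in> {0..<\<tau>}" for t
      using someI_ex[OF ex[OF that]] unfolding C_def by auto
    define qq where "qq t = (SOME q. continuous_on {0..C t} q \<and> q 0 = x \<and> (\<forall>u\<in>{0..C t}. f (q u) = p u))" for t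
    have qq: "continuous_on {0..C t} (qq t) \<and> qq t 0 = x \<and> (\<forall>u\<in>{0..C t}. f (qq t u) = p u)"
      if "t \<in> {0..<\<tau>}" for t
    proof -
      have "\<exists>q. continuous_on {0..C t} q \<and> q 0 = x \<and> (\<forall>u\<in>{0..C t}. f (q u) = p u)"
        using C(1)[OF that] unfolding B_def by blast
      then show ?thesis unfolding qq_def by (rule someI_ex)
    qed
    define Q where "Q t = qq t t" for t
    have agree: "Q u = qq t u" if t: "t \<in> {0..<\<tau>}" and u: "u \<in> {0..<\<tau>}" "u \<le> C t" for t u
    proof -
      define m where "m = min (C u) (C t)"
      have m: "{0..m} \<subseteq> {0..C u}" "{0..m} \<subseteq> {0..C t}" unfolding m_def by auto
      have um: "u \<in> {0..m}" using u C(2)[OF u(1)] unfolding m_def by auto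
      show ?thesis unfolding Q_def
      proof (rule lift_unique[OF lh connected_Icc[of 0 m], where a=0 and qa="qq u" and qb="qq t" and t=u])
        show "continuous_on {0..m} (qq u)" using qq[OF u(1)] m(1) continuous_on_subset by blast
        show "continuous_on {0..m} (qq t)" using qq[OF t] m(2) continuous_on_subset by blast
        show "\<forall>s\<in>{0..m}. f (qq u s) = f (qq t s)" using qq[OF u(1)] qq[OF t] m by auto
        show "0 \<in> {0..m}" using um by auto
        show "qq u 0 = qq t 0" using qq[OF u(1)] qq[OF t] by simp
        show "u \<in> {0..m}" by (rule um)
      qed
    qed
    have Qlift: "f (Q u) = p u" if "u \<in> {0..<\<tau>}" for u
      using qq[OF that] C(2)[OF that] that unfolding Q_def by auto
    have Q0: "Q 0 = x" using qq[of 0] \<tau>pos unfolding Q_def by auto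
    have Qcont: "continuous_on {0..<\<tau>} Q"
      unfolding continuous_on_iff
    proof (intro ballI allI impI)
      fix t e assume t: "t \<in> {0..<\<tau>}" and e: "(0::real) < e"
      have "t \<in> {0..C t}" using t C(2)[OF t] by auto
      then obtain d where d: "d > 0" "\<forall>x'\<in>{0..C t}. dist x' t < d \<longrightarrow> dist (qq t x') (qq t t) < e"
        using qq[OF t] e unfolding continuous_on_iff by blast
      show "\<exists>d>0. \<forall>x'\<in>{0..<\<tau>}. dist x' t < d \<longrightarrow> dist (Q x') (Q t) < e"
      proof (intro exI[of _ "min d (C t - t)"] conjI ballI impI)
        show "0 < min d (C t - t)" using d C(2)[OF t] by auto
        fix x' assume x': "x' \<in> {0..<\<tau>}" "dist x' t < min d (C t - t)"
        then have x'C: "x' \<le> C t" by (auto simp: dist_real_def)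
        have "Q x' = qq t x'" using agree[OF t x'(1) x'C] .
        moreover have "Q t = qq t t" unfolding Q_def ..
        ultimately show "dist (Q x') (Q t) < e" using d x' x'C by auto
      qed
    qed
    have \<tau>in: "\<tau> \<in> {0<..1}" using \<tau>pos \<tau>1 by auto
    obtain tn where tn: "\<forall>n. tn n \<in> {0..<\<tau>}" "tn \<longlonglongrightarrow> \<tau>" "convergent (\<lambda>n. Q (tn n))"
      using cp \<tau>in Qcont Qlift unfolding continuation_property_def by blast
    then obtain z where z: "(\<lambda>n. Q (tn n)) \<longlonglongrightarrow> z" unfolding convergent_def by blast
    have "isCont f z" using cf by (simp add: continuous_on_eq_continuous_at)
    then have l1: "(\<lambda>n. f (Q (tn n))) \<longlonglongrightarrow> f z" using z by (rule isCont_tendsto_compose)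
    have l2: "(\<lambda>n. p (tn n)) \<longlonglongrightarrow> p \<tau>"
    proof (intro continuous_on_tendsto_compose[OF cpp tn(2)])
      show "\<tau> \<in> {0..1}" using \<tau>0 \<tau>1 by auto
      have "\<forall>n. tn n \<in> {0..1}" using tn(1) \<tau>1 by (auto intro: less_imp_le less_le_trans)
      then show "\<forall>\<^sub>F n in sequentially. tn n \<in> {0..1}" by (intro always_eventually)
    qed
    have "(\<lambda>n. f (Q (tn n))) = (\<lambda>n. p (tn n))" using Qlift tn(1) by auto
    then have fz: "f z = p \<tau>" using l1 l2 LIMSEQ_unique by metis
    obtain T V g where TV: "z \<in> T" "open T" "open V" "homeomorphism T V f g"
      using sheet by blast
    have "f z \<in> f ` T" using TV(1) by blast
    then have "p \<tau> \<in> V" using homeomorphism_image1[OF TV(4)] fz by simp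
    then obtain \<delta> where \<delta>: "\<delta> > 0" "\<forall>u\<in>{0..1}. \<bar>u - \<tau>\<bar> < \<delta> \<longrightarrow> p u \<in> V"
      using pnear TV(3) by blast
    have ev1: "eventually (\<lambda>n. Q (tn n) \<in> T) sequentially"
      by (rule topological_tendstoD[OF z TV(2,1)])
    have ev2: "eventually (\<lambda>n. dist (tn n) \<tau> < \<delta>) sequentially"
      using tn(2) \<delta>(1) by (rule tendstoD)
    obtain n where n: "Q (tn n) \<in> T" "dist (tn n) \<tau> < \<delta>"
      using eventually_happens'[OF _ eventually_conj[OF ev1 ev2]] by auto
    define s where "s = tn n"
    have tnn: "0 \<le> tn n" "tn n < \<tau>" using tn(1) by auto
    have s: "0 \<le> s" "s \<le> \<tau>" "\<tau> - \<delta> < s" using tnn n(2) unfolding s_def by (auto simp: dist_real_def)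
    have sub: "{0..s} \<subseteq> {0..<\<tau>}" using tnn unfolding s_def by auto
    have Qc: "continuous_on {0..s} Q" using Qcont sub by (rule continuous_on_subset)
    have Ql: "\<forall>t\<in>{0..s}. f (Q t) = p t" using Qlift sub by auto
    have Qs: "Q s \<in> T" using n(1) unfolding s_def .
    show ?thesis by (rule finish[where q=Q, OF s \<delta>(1) Qc Q0 Ql TV(4) Qs \<delta>(2)])
  qed
  then obtain c where c: "c \<in> B" "\<tau> \<le> c" "\<tau> < c \<or> c = 1" by blast
  have "c \<le> \<tau>" unfolding \<tau>_def using bddB c(1) by (rule cSup_upper[rotated])
  then have "1 \<in> B" using c by auto
  then show ?thesis unfolding B_def by auto
qed

lemma rect_reverse:
  assumes p: "rectifiable_path p"
  shows "rectifiable_path (reversepath p)"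
proof -
  have sub: "partition_sums (reversepath p) 0 1 \<subseteq> partition_sums p 0 1"
  proof
    fix s assume "s \<in> partition_sums (reversepath p) 0 1"
    then obtain t n where tn: "s = (\<Sum>i<n. dist (reversepath p (t i)) (reversepath p (t (Suc i))))"
      "t 0 = 0" "t n = 1" "\<forall>i<n. t i \<le> t (Suc i)"
      unfolding partition_sums_def by blast
    define u where "u i = 1 - t (n - i)" for i
    have u0: "u 0 = 0" "u n = 1" using tn unfolding u_def by auto
    have um: "\<forall>i<n. u i \<le> u (Suc i)"
    proof (intro allI impI)
      fix i assume i: "i < n"
      then have e: "n - i = Suc (n - Suc i)" by simp
      have "n - Suc i < n" using i by simp
      then have "t (n - Suc i) \<le> t (Suc (n - Suc i))" using tn(4) by blast
      then show "u i \<le> u (Suc i)" using e unfolding u_def by simp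
    qed
    define g where "g j = dist (p (1 - t j)) (p (1 - t (Suc j)))" for j
    have "(\<Sum>i<n. dist (p (u i)) (p (u (Suc i)))) = (\<Sum>i<n. g (n - Suc i))"
    proof (rule sum.cong[OF refl])
      fix i assume "i \<in> {..<n}"
      then have "n - i = Suc (n - Suc i)" by simp
      then show "dist (p (u i)) (p (u (Suc i))) = g (n - Suc i)"
        unfolding u_def g_def by (simp add: dist_commute)
    qed
    also have "\<dots> = (\<Sum>i<n. g i)" by (rule sum.nat_diff_reindex)
    also have "\<dots> = s" unfolding tn(1) g_def reversepath_def ..
    finally show "s \<in> partition_sums p 0 1"
      unfolding partition_sums_def using u0 um by blast
  qed
  have "path_length (reversepath p) 0 1 \<le> path_length p 0 1"
    unfolding path_length_def by (rule SUP_subset_mono[OF sub order_refl])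
  then show ?thesis using p unfolding rectifiable_path_def by (auto simp: path_reversepath)
qed

lemma homotopy_lift_cont:
  fixes f :: "'a::metric_space \<Rightarrow> 'b::metric_space" and H :: "'c::metric_space \<times> real \<Rightarrow> 'b"
  assumes lh: "local_homeomorphism f" and cH: "continuous_on (U \<times> {0..1}) H"
    and G: "\<And>y. y \<in> U \<Longrightarrow> continuous_on {0..1} (G y) \<and> G y 0 = x \<and> (\<forall>t\<in>{0..1}. f (G y t) = H (y,t))"
    and y1: "y1 \<in> U"
  shows "continuous (at y1 within U) (\<lambda>y. G y 1)"
proof -
  have Hc: "continuous_on {0..1} (\<lambda>t. H (y,t))" if "y \<in> U" for y
    by (rule continuous_on_compose2[OF cH continuous_on_Pair[OF continuous_on_const continuous_on_id]])
      (use that in auto)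
  have Hy: "continuous_on U (\<lambda>y. H (y,t))" if "t \<in> {0..1}" for t
    by (rule continuous_on_compose2[OF cH continuous_on_Pair[OF continuous_on_id continuous_on_const]])
      (use that in auto)
  show ?thesis
  proof (rule connected_induction_simple[where S="{0..1::real}" and a=0 and P="\<lambda>s. continuous (at y1 within U) (\<lambda>y. G y s)"])
    show "connected {0..1::real}" by (rule connected_Icc)
    show "(0::real) \<in> {0..1}" "(1::real) \<in> {0..1}" by auto
    show "continuous (at y1 within U) (\<lambda>y. G y 0)"
    proof (rule continuous_transform_within[where \<delta>=1])
      show "continuous (at y1 within U) (\<lambda>_. x)" by simp
    qed (use G y1 in auto)
  next
    fix \<tau> :: real assume \<tau>: "\<tau> \<in> {0..1}"
    obtain T V g where TV: "G y1 \<tau> \<in> T" "open T" "open V" "homeomorphism T V f g"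
      using lh unfolding local_homeomorphism_def by blast
    have gf: "\<forall>z\<in>T. g (f z) = z" and fg: "\<forall>v\<in>V. f (g v) = v" and fT: "f ` T = V"
      and cg: "continuous_on V g"
      using TV(4) unfolding homeomorphism_def by auto
    obtain e where e: "e > 0" "ball (G y1 \<tau>) e \<subseteq> T" using TV(1,2) open_contains_ball by blast
    obtain \<delta> where \<delta>: "\<delta> > 0" "\<forall>t\<in>{0..1}. dist t \<tau> < \<delta> \<longrightarrow> dist (G y1 t) (G y1 \<tau>) < e"
      using G[OF y1] \<tau> e(1) unfolding continuous_on_iff by blast
    have GT: "G y1 t \<in> T" if "t \<in> {0..1}" "dist t \<tau> < \<delta>" for t
    proof -
      have "dist (G y1 t) (G y1 \<tau>) < e" using \<delta>(2) that by blast
      then have "G y1 t \<in> ball (G y1 \<tau>) e" by (simp add: dist_commute)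
      then show ?thesis using e(2) by blast
    qed
    define lo where "lo = max 0 (\<tau> - \<delta>/2)"
    define hi where "hi = min 1 (\<tau> + \<delta>/2)"
    define I where "I = {lo..hi}"
    have I01: "I \<subseteq> {0..1}" unfolding I_def lo_def hi_def by auto
    have Id: "dist t \<tau> < \<delta>" if "t \<in> I" for t
      using that \<delta>(1) unfolding I_def lo_def hi_def by (auto simp: dist_real_def)
    define N where "N = {0..1} \<inter> ball \<tau> (\<delta>/2)"
    have Nop: "openin (top_of_set {0..1}) N" unfolding N_def by (rule openin_open_Int) simp
    have \<tau>N: "\<tau> \<in> N" using \<tau> \<delta>(1) unfolding N_def by auto
    have NI: "N \<subseteq> I"
    proof
      fix r assume r: "r \<in> N"
      then have "\<bar>\<tau> - r\<bar> < \<delta>/2" "0 \<le> r" "r \<le> 1" unfolding N_def by (auto simp: dist_real_def)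
      moreover have "\<tau> - r < \<delta>/2 \<and> - (\<tau> - r) < \<delta>/2"
        using abs_less_iff[THEN iffD1, OF calculation(1)] .
      ultimately show "r \<in> I" unfolding I_def lo_def hi_def by auto
    qed
    obtain W where W: "open W" "W \<inter> (U \<times> {0..1}) = H -` V \<inter> (U \<times> {0..1})"
      using cH TV(3) unfolding continuous_on_open_invariant by blast
    have "{y1} \<times> I \<subseteq> W"
    proof
      fix z assume "z \<in> {y1} \<times> I"
      then obtain t where z: "z = (y1, t)" "t \<in> I" by blast
      have "H (y1, t) = f (G y1 t)" using G[OF y1] I01 z(2) by auto
      also have "\<dots> \<in> V" using GT[of t] Id[OF z(2)] I01 z(2) fT by auto
      finally have "z \<in> H -` V \<inter> (U \<times> {0..1})" using z y1 I01 by auto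
      then show "z \<in> W" using W(2) by blast
    qed
    then obtain X0 where X0: "y1 \<in> X0" "open X0" "X0 \<times> I \<subseteq> W"
      using Elementary_Topology.tube_lemma[OF compact_Icc[of lo hi] W(1)] unfolding I_def by blast
    have HV: "H (y, t) \<in> V" if "y \<in> U" "y \<in> X0" "t \<in> I" for y t
    proof -
      have "(y, t) \<in> W \<inter> (U \<times> {0..1})" using X0(3) that I01 by auto
      then show ?thesis using W(2) by blast
    qed
    show "\<exists>T. openin (top_of_set {0..1}) T \<and> \<tau> \<in> T \<and>
             (\<forall>s\<in>T. \<forall>t\<in>T. continuous (at y1 within U) (\<lambda>y. G y s) \<longrightarrow> continuous (at y1 within U) (\<lambda>y. G y t))"
    proof (intro exI conjI ballI impI)
      show "openin (top_of_set {0..1}) N" by (rule Nop)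
      show "\<tau> \<in> N" by (rule \<tau>N)
      fix s t assume sN: "s \<in> N" and tN: "t \<in> N" and Ps: "continuous (at y1 within U) (\<lambda>y. G y s)"
      have sI: "s \<in> I" and tI: "t \<in> I" using sN tN NI by auto
      have ev1: "eventually (\<lambda>y. G y s \<in> T) (at y1 within U)"
        using Ps unfolding continuous_within
        by (rule topological_tendstoD[OF _ TV(2)]) (use GT[of s] Id[OF sI] I01 sI in auto)
      have ev2: "eventually (\<lambda>y. y \<in> X0 \<and> y \<in> U) (at y1 within U)"
        unfolding eventually_at_topological using X0 by blast
      have evq: "eventually (\<lambda>y. g (H (y,t)) = G y t) (at y1 within U)"
        using ev1 ev2
      proof eventually_elim
        case (elim y)
        have cI: "continuous_on I (\<lambda>r. H (y,r))" using Hc[of y] elim I01 continuous_on_subset by blast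
        show ?case unfolding I_def
        proof (rule lift_unique[OF lh connected_Icc[of lo hi], where a=s and qa="\<lambda>r. g (H (y,r))" and qb="G y" and t=t])
          show "continuous_on {lo..hi} (\<lambda>r. g (H (y, r)))"
          proof -
            have "(\<lambda>r. H (y, r)) ` I \<subseteq> V" using HV elim by auto
            then show ?thesis using continuous_on_compose2[OF cg cI] unfolding I_def by blast
          qed
          show "continuous_on {lo..hi} (G y)" using G[of y] elim I01 continuous_on_subset unfolding I_def by blast
          show "\<forall>r\<in>{lo..hi}. f (g (H (y, r))) = f (G y r)"
            using fg HV G[of y] elim I01 unfolding I_def by auto
          show "s \<in> {lo..hi}" "t \<in> {lo..hi}" using sI tI unfolding I_def by auto
          have "H (y, s) = f (G y s)" using G[of y] elim sI I01 by auto
          then show "g (H (y, s)) = G y s" using gf elim by auto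
        qed
      qed
      have limg: "((\<lambda>y. g (H (y,t))) \<longlongrightarrow> g (H (y1,t))) (at y1 within U)"
      proof -
        have v: "H (y1,t) \<in> V" using HV[OF y1 X0(1) tI] .
        have "isCont g (H (y1,t))" using cg TV(3) v by (simp add: continuous_on_eq_continuous_at)
        moreover have "continuous (at y1 within U) (\<lambda>y. H (y,t))"
          using Hy[of t] tI I01 y1 by (auto simp: continuous_on_eq_continuous_within)
        ultimately have "continuous (at y1 within U) (\<lambda>y. g (H (y,t)))" by (rule continuous_within_compose3)
        then show ?thesis unfolding continuous_within .
      qed
      have gG: "g (H (y1,t)) = G y1 t"
      proof -
        have "H (y1, t) = f (G y1 t)" using G[OF y1] tI I01 by auto
        then show ?thesis using gf GT[of t] Id[OF tI] tI I01 by auto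
      qed
      from limg have "((\<lambda>y. g (H (y,t))) \<longlongrightarrow> G y1 t) (at y1 within U)" unfolding gG .
      then show "continuous (at y1 within U) (\<lambda>y. G y t)"
        unfolding continuous_within by (rule Lim_transform_eventually[OF _ evq])
    qed
  qed
qed

theorem theorem4:
  fixes f :: "'a::metric_space \<Rightarrow> 'b::metric_space"
  assumes "continuous_on UNIV f"
    and "complete (UNIV :: 'a set)"
    and "\<And>x::'a. x islimpt UNIV"
    and "\<And>p. rectifiable_path p \<Longrightarrow> bounded_path_lifting f p"
  shows "(\<forall>p. rectifiable_path p \<longrightarrow> continuation_property f p) \<and>
         (path_connected (UNIV :: 'b set) \<and> locally_R_contractible (UNIV :: 'b set) \<and>
          local_homeomorphism f \<longrightarrow> covering_space UNIV f UNIV)"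
proof -
  have cf: "continuous_on UNIV f" by (rule assms(1))
  have P1: "\<forall>p. rectifiable_path p \<longrightarrow> continuation_property f p"
    using part1 assms(2,4) by blast
  have P2: "covering_space UNIV f UNIV"
    if pc: "path_connected (UNIV :: 'b set)" and lrc: "locally_R_contractible (UNIV :: 'b set)"
      and lh: "local_homeomorphism f"
  proof -
    have lift: "\<exists>q. continuous_on {0..1} q \<and> q 0 = x \<and> (\<forall>t\<in>{0..1}. f (q t) = p t)"
      if "rectifiable_path p" "f x = p 0" for p x
    proof -
      have "path p" using that(1) unfolding rectifiable_path_def by blast
      moreover have "continuation_property f p" using P1 that(1) by blast
      ultimately show ?thesis using lift_exists[OF lh cf, of p x] that(2) by blast
    qed
    have sheet: "\<exists>T V g. z \<in> T \<and> open T \<and> open V \<and> homeomorphism T V f g" for z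
      using lh unfolding local_homeomorphism_def by blast
    have revlift: "\<exists>x. f x = y0 \<and> (\<exists>q. continuous_on {0..1} q \<and> q 0 = x \<and> q 1 = z \<and> (\<forall>t\<in>{0..1}. f (q t) = H (y,t)))"
      if H: "\<forall>t \<in> {0..1}. H (y0, t) = y0" "\<forall>y \<in> U. H (y, 0) = y0 \<and> H (y, 1) = y"
        "\<forall>y \<in> U. rectifiable_path (\<lambda>t. H (y, t))" and y: "y \<in> U" and z: "f z = y" for U H y0 y z
    proof -
      let ?r = "reversepath (\<lambda>t. H (y, t))"
      have rr: "rectifiable_path ?r" by (rule rect_reverse[OF H(3)[rule_format, OF y]])
      have r0: "f z = ?r 0" using H(2) y z by (simp add: reversepath_def)
      obtain q where q: "continuous_on {0..1} q" "q 0 = z" "\<forall>t\<in>{0..1}. f (q t) = ?r t"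
        using lift[OF rr r0] by blast
      have "f (q 1) = ?r 1" using q(3) by simp
      then have fx: "f (q 1) = y0" using H(2) y by (simp add: reversepath_def)
      have "path q" using q(1) unfolding path_def .
      then have "path (reversepath q)" by (simp add: path_reversepath)
      then have c: "continuous_on {0..1} (reversepath q)" unfolding path_def .
      have l: "\<forall>t\<in>{0..1}. f (reversepath q t) = H (y,t)"
      proof
        fix t :: real assume t: "t \<in> {0..1}"
        then have "1 - t \<in> {0..1}" by auto
        then have "f (q (1 - t)) = ?r (1 - t)" using q(3) by blast
        then show "f (reversepath q t) = H (y,t)" by (simp add: reversepath_def)
      qed
      have e: "reversepath q 0 = q 1" "reversepath q 1 = z" using q(2) by (auto simp: reversepath_def)
      show ?thesis
        by (rule exI[of _ "q 1"], rule conjI[OF fx], rule exI[of _ "reversepath q"]) (use c l e in blast)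
    qed
    have surj: "range f = UNIV"
    proof -
      have "connected (UNIV :: 'b set)" using pc by (rule path_connected_imp_connected)
      note conn = this
      have op: "open (range f)"
      proof (subst open_subopen, intro ballI)
        fix y assume "y \<in> range f"
        then obtain x where x: "y = f x" by blast
        obtain T V g where TV: "x \<in> T" "open T" "open V" "homeomorphism T V f g" using sheet by blast
        have VT: "V = f ` T" using homeomorphism_image1[OF TV(4)] by simp
        have "y \<in> V" using x TV(1) VT by blast
        moreover have "V \<subseteq> range f" using VT by blast
        ultimately show "\<exists>T. open T \<and> y \<in> T \<and> T \<subseteq> range f" using TV(3) by blast
      qed
      have cl: "closed (range f)"
        unfolding closed_def
      proof (subst open_subopen, intro ballI)
        fix y0 assume y0: "y0 \<in> - range f"
        obtain U H where UH0: "open U" "U \<subseteq> UNIV" "y0 \<in> U" "continuous_on (U \<times> {0..1}) H" "H ` (U \<times> {0..1}) \<subseteq> U"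
          "\<forall>t \<in> {0..1}. H (y0, t) = y0"
          "\<forall>y \<in> U. H (y, 0) = y0 \<and> H (y, 1) = y" "\<forall>y \<in> U. rectifiable_path (\<lambda>t. H (y, t))"
          using lrc[unfolded locally_R_contractible_def, rule_format, OF UNIV_I[of y0]] by (elim exE conjE)
        note UH = UH0(1,3,6,7,8)
        have "U \<subseteq> - range f"
        proof
          fix y assume y: "y \<in> U"
          show "y \<in> - range f"
          proof
            assume "y \<in> range f"
            then obtain z where "f z = y" by blast
            then obtain x where "f x = y0" using revlift[OF UH(3,4,5) y] by blast
            then show False using y0 by blast
          qed
        qed
        then show "\<exists>T. open T \<and> y0 \<in> T \<and> T \<subseteq> - range f" using UH(1,2) by blast
      qed
      have o2: "openin (top_of_set UNIV) (range f)" by (rule open_openin_trans[OF open_UNIV op subset_UNIV])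
      have c2: "closedin (top_of_set UNIV) (range f)" using cl[unfolded closed_closedin] by (simp only: subtopology_UNIV)
      have "range f = {} \<or> range f = UNIV"
        using conn[unfolded connected_clopen, rule_format, OF conjI[OF o2 c2]] .
      moreover have "range f \<noteq> {}" by simp
      ultimately show ?thesis by blast
    qed
    show ?thesis
      unfolding covering_space_def
    proof (intro conjI ballI)
      show "continuous_on UNIV f" by (rule cf)
      show "f ` UNIV = UNIV" by (rule surj)
      fix y0 :: 'b
      obtain U H where UH0: "open U" "U \<subseteq> UNIV" "y0 \<in> U" "continuous_on (U \<times> {0..1}) H" "H ` (U \<times> {0..1}) \<subseteq> U"
          "\<forall>t \<in> {0..1}. H (y0, t) = y0"
          "\<forall>y \<in> U. H (y, 0) = y0 \<and> H (y, 1) = y" "\<forall>y \<in> U. rectifiable_path (\<lambda>t. H (y, t))"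
          using lrc[unfolded locally_R_contractible_def, rule_format, OF UNIV_I[of y0]] by (elim exE conjE)
      note UH = UH0(1,3,4,6,7,8)
      define F where "F = f -` {y0}"
      define Gl where "Gl x y = (SOME q. continuous_on {0..1} q \<and> q 0 = x \<and> (\<forall>t\<in>{0..1}. f (q t) = H (y,t)))" for x y
      have Gl: "continuous_on {0..1} (Gl x y) \<and> Gl x y 0 = x \<and> (\<forall>t\<in>{0..1}. f (Gl x y t) = H (y,t))"
        if "x \<in> F" "y \<in> U" for x y
      proof -
        have "f x = H (y, 0)" using that UH(5) unfolding F_def by auto
        then have "\<exists>q. continuous_on {0..1} q \<and> q 0 = x \<and> (\<forall>t\<in>{0..1}. f (q t) = H (y,t))"
          using lift[of "\<lambda>t. H (y,t)" x] UH(6) that(2) by blast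
        then show ?thesis unfolding Gl_def by (rule someI_ex)
      qed
      define \<sigma> where "\<sigma> x y = Gl x y 1" for x y
      have f\<sigma>: "f (\<sigma> x y) = y" if "x \<in> F" "y \<in> U" for x y
        using Gl[OF that] UH(5) that(2) unfolding \<sigma>_def by auto
      have \<sigma>cont: "continuous_on U (\<sigma> x)" if x: "x \<in> F" for x
        unfolding continuous_on_eq_continuous_within \<sigma>_def
      proof
        fix y1 assume y1: "y1 \<in> U"
        have "\<And>y. y \<in> U \<Longrightarrow> continuous_on {0..1} (Gl x y) \<and> Gl x y 0 = x \<and> (\<forall>t\<in>{0..1}. f (Gl x y t) = H (y,t))"
          using Gl x by blast
        from homotopy_lift_cont[OF lh UH(3) this y1]
        show "continuous (at y1 within U) (\<lambda>y. Gl x y 1)" .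
      qed
      have uniq: "x1 = x2" if "x1 \<in> F" "x2 \<in> F" "y \<in> U" "\<sigma> x1 y = \<sigma> x2 y" for x1 x2 y
      proof -
        have "Gl x1 y 0 = Gl x2 y 0"
        proof (rule lift_unique[OF lh connected_Icc[of 0 1], where a=1 and qa="Gl x1 y" and qb="Gl x2 y" and t=0])
          show "continuous_on {0..1} (Gl x1 y)" "continuous_on {0..1} (Gl x2 y)"
            using Gl that by blast+
          show "\<forall>t\<in>{0..1}. f (Gl x1 y t) = f (Gl x2 y t)" using Gl[OF that(1,3)] Gl[OF that(2,3)] by simp
          show "(1::real) \<in> {0..1}" "(0::real) \<in> {0..1}" by auto
          show "Gl x1 y 1 = Gl x2 y 1" using that(4) unfolding \<sigma>_def .
        qed
        then show ?thesis using Gl[OF that(1,3)] Gl[OF that(2,3)] by simp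
      qed
      have hit: "\<exists>x\<in>F. \<sigma> x y = z" if hy: "y \<in> U" "f z = y" for y z
      proof -
        obtain x q where xq: "f x = y0" "continuous_on {0..1} q" "q 0 = x" "q 1 = z"
          "\<forall>t\<in>{0..1}. f (q t) = H (y,t)"
          using revlift[OF UH(4,5,6) hy] by blast
        have xF: "x \<in> F" using xq(1) unfolding F_def by simp
        have "Gl x y 1 = q 1"
        proof (rule lift_unique[OF lh connected_Icc[of 0 1], where a=0 and qa="Gl x y" and qb=q and t=1])
          show "continuous_on {0..1} (Gl x y)" using Gl[OF xF hy(1)] by blast
          show "continuous_on {0..1} q" by (rule xq(2))
          show "\<forall>t\<in>{0..1}. f (Gl x y t) = f (q t)" using Gl[OF xF hy(1)] xq(5) by simp
          show "(1::real) \<in> {0..1}" "(0::real) \<in> {0..1}" by auto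
          show "Gl x y 0 = q 0" using Gl[OF xF hy(1)] xq(3) by simp
        qed
        then show ?thesis using xF xq(4) unfolding \<sigma>_def by blast
      qed
      show "\<exists>T. y0 \<in> T \<and> openin (top_of_set UNIV) T \<and>
             (\<exists>v. \<Union>v = UNIV \<inter> f -` T \<and> (\<forall>u\<in>v. openin (top_of_set UNIV) u) \<and>
                  pairwise disjnt v \<and> (\<forall>u\<in>v. \<exists>q. homeomorphism u T f q))"
      proof (intro exI conjI)
        show "y0 \<in> U" by (rule UH(2))
        show "openin (top_of_set UNIV) U" by (rule open_openin_trans[OF open_UNIV UH(1) subset_UNIV])
        show "\<Union>((\<lambda>x. \<sigma> x ` U) ` F) = UNIV \<inter> f -` U"
        proof
          show "\<Union>((\<lambda>x. \<sigma> x ` U) ` F) \<subseteq> UNIV \<inter> f -` U"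
          proof
            fix z assume "z \<in> \<Union>((\<lambda>x. \<sigma> x ` U) ` F)"
            then obtain x y where xy: "x \<in> F" "y \<in> U" "z = \<sigma> x y" by blast
            then have "f z = y" using f\<sigma> by simp
            then show "z \<in> UNIV \<inter> f -` U" using xy(2) by simp
          qed
          show "UNIV \<inter> f -` U \<subseteq> \<Union>((\<lambda>x. \<sigma> x ` U) ` F)"
          proof
            fix z assume "z \<in> UNIV \<inter> f -` U"
            then have fz: "f z \<in> U" by simp
            then obtain x where x: "x \<in> F" "\<sigma> x (f z) = z" using hit[OF fz refl] by blast
            have "z \<in> \<sigma> x ` U" using fz x(2) by (metis imageI)
            then show "z \<in> \<Union>((\<lambda>x. \<sigma> x ` U) ` F)" by (rule UnionI[OF imageI[OF x(1)]])
          qed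
        qed
        show "\<forall>u\<in>(\<lambda>x. \<sigma> x ` U) ` F. openin (top_of_set UNIV) u"
        proof
          fix u assume "u \<in> (\<lambda>x. \<sigma> x ` U) ` F"
          then obtain x where x: "x \<in> F" "u = \<sigma> x ` U" by blast
          have "open (\<sigma> x ` U)"
          proof (subst open_subopen, intro ballI)
            fix z assume "z \<in> \<sigma> x ` U"
            then obtain y where y: "y \<in> U" "z = \<sigma> x y" by blast
            obtain T' V' g' where TV: "z \<in> T'" "open T'" "open V'" "homeomorphism T' V' f g'"
              using sheet by blast
            have gf: "\<forall>a\<in>T'. g' (f a) = a" using TV(4) unfolding homeomorphism_def by blast
            define N where "N = T' \<inter> (UNIV \<inter> f -` (U \<inter> \<sigma> x -` T'))"
            have "open (U \<inter> \<sigma> x -` T')" by (rule continuous_open_preimage[OF \<sigma>cont[OF x(1)] UH(1) TV(2)])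
            then have "open (UNIV \<inter> f -` (U \<inter> \<sigma> x -` T'))" by (rule continuous_open_preimage[OF cf open_UNIV])
            then have "open N" unfolding N_def using TV(2) by blast
            moreover have "z \<in> N" unfolding N_def using TV(1) y f\<sigma>[OF x(1) y(1)] by auto
            moreover have "N \<subseteq> \<sigma> x ` U"
            proof
              fix z' assume z': "z' \<in> N"
              then have y': "f z' \<in> U" "\<sigma> x (f z') \<in> T'" "z' \<in> T'" unfolding N_def by auto
              have "f (\<sigma> x (f z')) = f z'" using f\<sigma>[OF x(1) y'(1)] .
              then have "\<sigma> x (f z') = z'" using gf y'(2,3) by metis
              then show "z' \<in> \<sigma> x ` U" using y'(1) by (metis imageI)
            qed
            ultimately show "\<exists>T. open T \<and> z \<in> T \<and> T \<subseteq> \<sigma> x ` U" by blast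
          qed
          then show "openin (top_of_set UNIV) u" unfolding x(2) by (rule open_openin_trans[OF open_UNIV _ subset_UNIV])
        qed
        show "pairwise disjnt ((\<lambda>x. \<sigma> x ` U) ` F)"
        proof (rule pairwise_imageI)
          fix x1 x2 assume x: "x1 \<in> F" "x2 \<in> F" "x1 \<noteq> x2"
          show "disjnt (\<sigma> x1 ` U) (\<sigma> x2 ` U)"
            unfolding disjnt_def
          proof (rule equals0I)
            fix z assume "z \<in> \<sigma> x1 ` U \<inter> \<sigma> x2 ` U"
            then obtain y1 y2 where y: "y1 \<in> U" "y2 \<in> U" "z = \<sigma> x1 y1" "z = \<sigma> x2 y2" by blast
            have "y1 = y2" using f\<sigma>[OF x(1) y(1)] f\<sigma>[OF x(2) y(2)] y(3,4) by simp
            then have "x1 = x2" using uniq[OF x(1,2) y(1)] y(3,4) by simp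
            then show False using x(3) by simp
          qed
        qed
        show "\<forall>u\<in>(\<lambda>x. \<sigma> x ` U) ` F. \<exists>q. homeomorphism u U f q"
        proof
          fix u assume "u \<in> (\<lambda>x. \<sigma> x ` U) ` F"
          then obtain x where x: "x \<in> F" "u = \<sigma> x ` U" by blast
          have "homeomorphism (\<sigma> x ` U) U f (\<sigma> x)"
            unfolding homeomorphism_def
          proof (intro conjI ballI)
            show "\<And>a. a \<in> \<sigma> x ` U \<Longrightarrow> \<sigma> x (f a) = a" using f\<sigma>[OF x(1)] by auto
            show "f ` \<sigma> x ` U = U"
            proof
              show "f ` \<sigma> x ` U \<subseteq> U" using f\<sigma>[OF x(1)] by auto
              show "U \<subseteq> f ` \<sigma> x ` U" using f\<sigma>[OF x(1)] by (metis image_eqI subsetI)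
            qed
            show "continuous_on (\<sigma> x ` U) f" using cf by (rule continuous_on_subset) simp
            show "\<And>y. y \<in> U \<Longrightarrow> f (\<sigma> x y) = y" using f\<sigma>[OF x(1)] .
            show "\<sigma> x ` U = \<sigma> x ` U" ..
            show "continuous_on U (\<sigma> x)" by (rule \<sigma>cont[OF x(1)])
          qed
          then show "\<exists>q. homeomorphism u U f q" using x(2) by blast
        qed
      qed
    qed
  qed
  show ?thesis using P1 P2 by blast
qed

end
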